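(* Let $\mathcal X$ be a finite set with $N=|\mathcal X|\ge 2$, let $c\in(0,1/N]$ and $\varepsilon\ge 0$. If a Markov kernel $K$ from $\mathcal X$ to a finite set $\mathcal Y$ satisfies $K\in\mathcal M(\varepsilon,c)$, then $$\eta_{\mathrm{TV}}(K)\le \min\left\{\frac{e^\varepsilon-1}{e^\varepsilon(1-Nc)+1},\,1\right\}.$$
   Context: A Markov kernel (mechanism) $K$ from $\mathcal X$ to $\mathcal Y$ is a row-stochastic $|\mathcal X|\times|\mathcal Y|$ matrix with entries $K_{Y|X=x}(y)$; for a distribution $P_X$ on $\mathcal X$, $(K\circ P_X)(y)=\sum_x K_{Y|X=x}(y)P_X(x)$. For $P_X$ with full support and $y$ with $(K\circ P_X)(y)>0$, the pointwise maximal leakage (PML) is $\ell_{K\times P_X}(X\to y)=\log\frac{\max_{x\in\mathcal X}K_{Y|X=x}(y)}{(K\circ P_X)(y)}$ (natural log). For $c\in(0,1/N]$, $\mathcal Q_{\mathcal X}(c)=\{P_X\in\mathcal P(\mathcal X):\min_x P_X(x)\ge c\}$. For a set $\mathcal P$ of distributions, $C(K,\mathcal P)=\sup_{P_X\in\mathcal P}\sup_{y:(K\circ P_X)(y)>0}\ell_{K\times P_X}(X\to y)$. $\mathcal M(\varepsilon,c)$ is the set of all kernels $K$ from $\mathcal X$ to some finite output set with $C(K,\mathcal Q_{\mathcal X}(c))\le\varepsilon$ (said to satisfy $(\varepsilon,c)$-PML). The Dobrushin coefficient is $\eta_{\mathrm{TV}}(K)=\sup_{P_X\neq Q_X}\frac{\mathrm{TV}(K\circ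 P_X\|K\circ Q_X)}{\mathrm{TV}(P_X\|Q_X)}=\max_{x\neq x'}\mathrm{TV}(K_{Y|X=x}\|K_{Y|X=x'})$, with $\mathrm{TV}(P\|Q)=\frac12\sum|P-Q|$. *)

theory Defs
  imports Complex_Main "HOL-Library.Extended_Real"
begin

text \<open>Markov kernels between finite types: K x y = K_{Y|X=x}(y).\<close>

definition is_distribution :: "('a::finite \<Rightarrow> real) \<Rightarrow> bool" where
  "is_distribution P \<longleftrightarrow> (\<forall>a. P a \<ge> 0) \<and> (\<Sum>a\<in>UNIV. P a) = 1"

definition is_kernel :: "('x::finite \<Rightarrow> 'y::finite \<Rightarrow> real) \<Rightarrow> bool" where
  "is_kernel K \<longleftrightarrow> (\<forall>x. is_distribution (K x))"

definition push :: "('x::finite \<Rightarrow> 'y \<Rightarrow> real) \<Rightarrow> ('x \<Rightarrow> real) \<Rightarrow> 'y \<Rightarrow> real" where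
  "push K P y = (\<Sum>x\<in>UNIV. K x y * P x)"

definition pml :: "('x::finite \<Rightarrow> 'y \<Rightarrow> real) \<Rightarrow> ('x \<Rightarrow> real) \<Rightarrow> 'y \<Rightarrow> real" where
  "pml K P y = ln ((MAX x\<in>UNIV. K x y) / push K P y)"

definition Qset :: "real \<Rightarrow> ('x::finite \<Rightarrow> real) set" where
  "Qset c = {P. is_distribution P \<and> (\<forall>x. P x \<ge> c)}"

definition Cap :: "('x::finite \<Rightarrow> 'y::finite \<Rightarrow> real) \<Rightarrow> ('x \<Rightarrow> real) set \<Rightarrow> ereal" where
  "Cap K Ps = (SUP Py \<in> {(P, y). P \<in> Ps \<and> push K P y > 0}. ereal (pml K (fst Py) (snd Py)))"

definition satisfies_PML :: "real \<Rightarrow> real \<Rightarrow> ('x::finite \<Rightarrow> 'y::finite \<Rightarrow> real) \<Rightarrow> bool" where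
  "satisfies_PML \<epsilon> c K \<longleftrightarrow> is_kernel K \<and> Cap K (Qset c) \<le> ereal \<epsilon>"

definition TV :: "('y::finite \<Rightarrow> real) \<Rightarrow> ('y \<Rightarrow> real) \<Rightarrow> real" where
  "TV P Q = (1/2) * (\<Sum>y\<in>UNIV. \<bar>P y - Q y\<bar>)"

text \<open>Dobrushin coefficient, in its max-over-pairs-of-rows form (given as equal in the paper).\<close>
definition dobrushin :: "('x::finite \<Rightarrow> 'y::finite \<Rightarrow> real) \<Rightarrow> real" where
  "dobrushin K = Max {TV (K x) (K x') | x x'. x \<noteq> x'}"

end

theory Submission
  imports Defs
begin

lemma key:
  fixes K :: "'x::finite \<Rightarrow> 'y::finite \<Rightarrow> real" and c \<epsilon> :: real
  assumes c0: "0 < c" and cN: "c \<le> 1 / real (card (UNIV :: 'x set))"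
    and S: "satisfies_PML \<epsilon> c K"
  shows "K x y \<le> exp \<epsilon> * (c * (\<Sum>z\<in>UNIV. K z y) + (1 - real (card (UNIV :: 'x set)) * c) * K x' y)"
proof -
  define N where "N = real (card (UNIV :: 'x set))"
  define a where "a = 1 - N * c"
  have Npos: "N > 0" unfolding N_def using card_gt_0_iff[of "UNIV :: 'x set"] by simp
  have a0: "a \<ge> 0" using cN Npos unfolding a_def N_def by (simp add: field_simps)
  have ker: "is_kernel K" and cap: "Cap K (Qset c) \<le> ereal \<epsilon>" using S unfolding satisfies_PML_def by auto
  have Kpos: "\<And>z w. K z w \<ge> 0" using ker unfolding is_kernel_def is_distribution_def by auto
  define P where "P = (\<lambda>z. c + (if z = x' then a else 0))"
  have sumP: "(\<Sum>z\<in>UNIV. P z) = 1"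
    unfolding P_def by (simp add: sum.distrib a_def N_def)
  have PQ: "P \<in> Qset c" unfolding Qset_def is_distribution_def using sumP c0 a0
    by (auto simp: P_def)
  have push_eq: "push K P y = c * (\<Sum>z\<in>UNIV. K z y) + a * K x' y"
  proof -
    have "push K P y = (\<Sum>z\<in>UNIV. c * K z y + (if z = x' then a * K x' y else 0))"
      unfolding push_def P_def by (intro sum.cong) (auto simp: algebra_simps)
    then show ?thesis by (simp add: sum.distrib sum_distrib_left)
  qed
  have ge: "push K P y \<ge> c * K x y"
  proof -
    have "c * K x y \<le> c * (\<Sum>z\<in>UNIV. K z y)"
      using c0 by (intro mult_left_mono member_le_sum) (auto simp: Kpos)
    also have "\<dots> \<le> push K P y" using push_eq a0 Kpos[of x' y] by simp
    finally show ?thesis .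
  qed
  have "K x y \<le> exp \<epsilon> * push K P y"
  proof (cases "push K P y > 0")
    case False
    then have "K x y = 0" using ge c0 Kpos[of x y]
      by (smt (verit) mult_pos_pos)
    moreover have "push K P y \<ge> 0" using ge c0 Kpos[of x y] by (smt (verit) mult_nonneg_nonneg)
    ultimately show ?thesis by simp
  next
    case True
    have "ereal (pml K (fst (P,y)) (snd (P,y))) \<le> Cap K (Qset c)"
      unfolding Cap_def by (rule SUP_upper) (use PQ True in auto)
    then have "ereal (pml K P y) \<le> ereal \<epsilon>" using cap by (metis fst_conv snd_conv order_trans)
    then have pl: "pml K P y \<le> \<epsilon>" by simp
    define m where "m = (MAX z\<in>UNIV. K z y)"
    have mx: "K x y \<le> m" unfolding m_def by (rule Max_ge) auto
    show ?thesis
    proof (cases "m > 0")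
      case False
      then show ?thesis using mx True by (smt (verit) exp_gt_zero mult_pos_pos)
    next
      case mpos: True
      have "ln (m / push K P y) \<le> \<epsilon>" using pl unfolding pml_def m_def .
      then have "m / push K P y \<le> exp \<epsilon>"
        using mpos True by (metis divide_pos_pos exp_le_cancel_iff exp_ln)
      then have "m \<le> exp \<epsilon> * push K P y" using True by (simp add: divide_le_eq)
      then show ?thesis using mx by simp
    qed
  qed
  then show ?thesis using push_eq unfolding a_def N_def by simp
qed

lemma tv_bound:
  fixes K :: "'x::finite \<Rightarrow> 'y::finite \<Rightarrow> real" and c \<epsilon> :: real
  assumes c0: "0 < c" and cN: "c \<le> 1 / real (card (UNIV :: 'x set))"
    and e0: "\<epsilon> \<ge> 0"
    and S: "satisfies_PML \<epsilon> c K"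
  shows "TV (K x) (K x') \<le> (exp \<epsilon> - 1) / (exp \<epsilon> * (1 - real (card (UNIV :: 'x set)) * c) + 1)"
proof -
  define N where "N = real (card (UNIV :: 'x set))"
  define a where "a = 1 - N * c"
  define e where "e = exp \<epsilon>"
  define \<tau> where "\<tau> = TV (K x) (K x')"
  have Npos: "N > 0" unfolding N_def using card_gt_0_iff[of "UNIV :: 'x set"] by simp
  have a0: "a \<ge> 0" using cN Npos unfolding a_def N_def by (simp add: field_simps)
  have ee: "e \<ge> 1" unfolding e_def using e0 by simp
  have ker: "is_kernel K" using S unfolding satisfies_PML_def by auto
  have row: "\<And>z. (\<Sum>w\<in>UNIV. K z w) = 1" using ker unfolding is_kernel_def is_distribution_def by auto
  define T where "T = (\<lambda>w. c * (\<Sum>z\<in>UNIV. K z w))"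
  have sumT: "(\<Sum>w\<in>UNIV. T w) = 1 - a"
  proof -
    have sw: "(\<Sum>w\<in>UNIV. \<Sum>z\<in>UNIV. K z w) = (\<Sum>z\<in>UNIV. \<Sum>w\<in>UNIV. K z w)"
      by (rule sum.swap)
    have "(\<Sum>w\<in>UNIV. T w) = c * (\<Sum>w\<in>UNIV. \<Sum>z\<in>UNIV. K z w)"
      unfolding T_def by (simp only: sum_distrib_left)
    also have "\<dots> = c * (\<Sum>z\<in>UNIV. \<Sum>w\<in>UNIV. K z w)" using sw by simp
    also have "\<dots> = c * N" by (simp add: row N_def)
    finally show ?thesis unfolding a_def by simp
  qed
  have pw: "\<And>w. max (K x w) (K x' w) \<le> e * T w + e * a * min (K x w) (K x' w)"
  proof -
    fix w
    have 1: "K x w \<le> e * (T w + a * K x' w)"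
      using key[OF c0 cN S, of x w x'] unfolding T_def e_def a_def N_def by simp
    have 2: "K x' w \<le> e * (T w + a * K x w)"
      using key[OF c0 cN S, of x' w x] unfolding T_def e_def a_def N_def by simp
    show "max (K x w) (K x' w) \<le> e * T w + e * a * min (K x w) (K x' w)"
      using 1 2 by (auto simp: max_def min_def algebra_simps)
  qed
  have mx: "\<And>w. max (K x w) (K x' w) = (K x w + K x' w + \<bar>K x w - K x' w\<bar>) / 2" by auto
  have mn: "\<And>w. min (K x w) (K x' w) = (K x w + K x' w - \<bar>K x w - K x' w\<bar>) / 2" by auto
  have D: "(\<Sum>w\<in>UNIV. \<bar>K x w - K x' w\<bar>) = 2 * \<tau>" unfolding \<tau>_def TV_def by simp
  have "(\<Sum>w\<in>UNIV. max (K x w) (K x' w)) \<le> (\<Sum>w\<in>UNIV. e * T w + e * a * min (K x w) (K x' w))"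
    by (rule sum_mono) (rule pw)
  also have "\<dots> = e * (1 - a) + e * a * (\<Sum>w\<in>UNIV. min (K x w) (K x' w))"
    by (simp add: sum.distrib sum_distrib_left[symmetric] sumT)
  finally have ineq: "(\<Sum>w\<in>UNIV. max (K x w) (K x' w)) \<le> e * (1 - a) + e * a * (\<Sum>w\<in>UNIV. min (K x w) (K x' w))" .
  have smax: "(\<Sum>w\<in>UNIV. max (K x w) (K x' w)) = 1 + \<tau>"
    unfolding mx by (simp add: sum_divide_distrib[symmetric] sum.distrib D row)
  have smin: "(\<Sum>w\<in>UNIV. min (K x w) (K x' w)) = 1 - \<tau>"
    unfolding mn by (simp add: sum_divide_distrib[symmetric] sum.distrib sum_subtractf D row)
  have "1 + \<tau> \<le> e * (1 - a) + e * a * (1 - \<tau>)" using ineq smax smin by simp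
  then have "\<tau> * (e * a + 1) \<le> e - 1" by (simp add: algebra_simps)
  moreover have "e * a + 1 > 0" using ee a0 by (smt (verit) mult_nonneg_nonneg)
  ultimately have "\<tau> \<le> (e - 1) / (e * a + 1)" by (simp add: le_divide_eq)
  then show ?thesis unfolding \<tau>_def e_def a_def N_def .
qed

lemma tv_le1:
  assumes "is_distribution P" "is_distribution Q"
  shows "TV P Q \<le> 1"
proof -
  have "\<And>y. \<bar>P y - Q y\<bar> \<le> P y + Q y" using assms unfolding is_distribution_def
    by (smt (verit))
  then have "(\<Sum>y\<in>UNIV. \<bar>P y - Q y\<bar>) \<le> (\<Sum>y\<in>UNIV. P y + Q y)" by (rule sum_mono)
  also have "\<dots> = 2" using assms unfolding is_distribution_def by (simp add: sum.distrib)
  finally show ?thesis unfolding TV_def by simp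
qed

theorem theorem1:
  fixes K :: "'x::finite \<Rightarrow> 'y::finite \<Rightarrow> real" and c \<epsilon> :: real
  assumes "card (UNIV :: 'x set) \<ge> 2"
    and "0 < c" and "c \<le> 1 / real (card (UNIV :: 'x set))"
    and "\<epsilon> \<ge> 0"
    and "satisfies_PML \<epsilon> c K"
  shows "dobrushin K \<le> min ((exp \<epsilon> - 1) / (exp \<epsilon> * (1 - real (card (UNIV :: 'x set)) * c) + 1)) 1"
proof -
  have "\<not> (\<forall>a b::'x. a = b)"
  proof
    assume h: "\<forall>a b::'x. a = b"
    then have "(UNIV :: 'x set) = {undefined}" by auto
    then have "card (UNIV :: 'x set) = 1" by (metis card.empty card_insert_disjoint empty_iff finite.emptyI One_nat_def)
    then show False using assms(1) by simp
  qed
  then obtain x0 x1 :: 'x where ne: "x0 \<noteq> x1" by blast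
  have fin: "finite {TV (K x) (K x') | x x'. x \<noteq> x'}"
  proof -
    have "{TV (K x) (K x') | x x'. x \<noteq> x'} \<subseteq> (\<lambda>(x, x'). TV (K x) (K x')) ` UNIV" by auto
    then show ?thesis by (rule finite_subset) simp
  qed
  have nemp: "{TV (K x) (K x') | x x'. x \<noteq> x'} \<noteq> {}" using ne by auto
  have ker: "is_kernel K" using assms(5) unfolding satisfies_PML_def by auto
  show ?thesis unfolding dobrushin_def
  proof (rule Max.boundedI[OF fin nemp])
    fix t assume "t \<in> {TV (K x) (K x') | x x'. x \<noteq> x'}"
    then obtain x x' where t: "t = TV (K x) (K x')" by auto
    show "t \<le> min ((exp \<epsilon> - 1) / (exp \<epsilon> * (1 - real (card (UNIV :: 'x set)) * c) + 1)) 1"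
      using tv_bound[OF assms(2,3,4,5), of x x'] tv_le1[of "K x" "K x'"] ker
      unfolding t is_kernel_def by simp
  qed
qed

end
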